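(* Let $q\ge 7$ be a prime power and $\mathcal{K}$ a set of $q(q-3)$ points in $\mathrm{PG}(2,q)$. Then there exists a line $L$ with $|L\cap\mathcal{K}|\notin\{0,q-3,q-2\}$.
   Context: $\mathrm{PG}(2,q)$ is the projective plane of $\mathbb{F}_q^3$; points are $1$-dimensional and lines $2$-dimensional subspaces. *)

theory Defs
  imports "HOL-Analysis.Finite_Cartesian_Product"
begin

text \<open>PG(2,F) for a field F: points are 1-dimensional subspaces of F^3,
lines are 2-dimensional subspaces of F^3 (both represented as sets of vectors).\<close>

definition pg_point :: "('a::field ^ 3) set \<Rightarrow> bool" where
  "pg_point P \<longleftrightarrow> (\<exists>v. v \<noteq> 0 \<and> P = range (\<lambda>c. c *s v))"

definition pg_line :: "('a::field ^ 3) set \<Rightarrow> bool" where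
  "pg_line S \<longleftrightarrow> (\<exists>u v. (\<forall>a b. a *s u + b *s v = 0 \<longrightarrow> a = 0 \<and> b = 0) \<and>
      S = {a *s u + b *s v | a b. True})"

definition points_on :: "('a::field ^ 3) set \<Rightarrow> ('a ^ 3) set set" where
  "points_on S = {P. pg_point P \<and> P \<subseteq> S}"

end

theory Submission
  imports Defs
begin

lemma card_ind: "finite X \<Longrightarrow> card {x\<in>X. P x} = (\<Sum>x\<in>X. if P x then 1 else 0)"
  by (simp add: sum.If_cases Int_def conj_commute)

lemma swap_count:
  assumes "finite A" "finite X"
  shows "(\<Sum>a\<in>A. card {x\<in>X. R a x}) = (\<Sum>x\<in>X. card {a\<in>A. R a x})"
proof -
  have "(\<Sum>a\<in>A. card {x\<in>X. R a x}) = (\<Sum>a\<in>A. \<Sum>x\<in>X. if R a x then 1 else 0)"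
    using assms by (simp add: card_ind)
  also have "\<dots> = (\<Sum>x\<in>X. \<Sum>a\<in>A. if R a x then 1 else 0)" by (rule sum.swap)
  also have "\<dots> = (\<Sum>x\<in>X. card {a\<in>A. R a x})"
    using assms by (simp add: card_ind)
  finally show ?thesis .
qed

lemma unique_count:
  assumes "finite A" "finite X" "\<And>x. x\<in>X \<Longrightarrow> \<exists>!a. a\<in>A \<and> R a x"
  shows "(\<Sum>a\<in>A. card {x\<in>X. R a x}) = card X"
proof -
  have "(\<Sum>a\<in>A. card {x\<in>X. R a x}) = (\<Sum>x\<in>X. card {a\<in>A. R a x})"
    by (rule swap_count[OF assms(1,2)])
  also have "\<dots> = (\<Sum>x\<in>X. 1)"
  proof (rule sum.cong)
    fix x assume "x \<in> X"
    then obtain a where "a\<in>A" "R a x" "\<And>b. b\<in>A \<Longrightarrow> R b x \<Longrightarrow> b = a" using assms(3) by metis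
    then have "{a\<in>A. R a x} = {a}" by blast
    then show "card {a\<in>A. R a x} = 1" by simp
  qed simp
  finally show ?thesis by simp
qed

definition ray :: "'a::field ^ 3 \<Rightarrow> ('a ^ 3) set" where
  "ray v = range (\<lambda>c. c *s v)"

definition span2 :: "'a::field ^ 3 \<Rightarrow> 'a ^ 3 \<Rightarrow> ('a ^ 3) set" where
  "span2 u v = {a *s u + b *s v | a b. True}"

definition indep :: "'a::field ^ 3 \<Rightarrow> 'a ^ 3 \<Rightarrow> bool" where
  "indep u v \<longleftrightarrow> (\<forall>a b. a *s u + b *s v = 0 \<longrightarrow> a = 0 \<and> b = 0)"

lemma pg_line_alt: "pg_line S \<longleftrightarrow> (\<exists>u v. indep u v \<and> S = span2 u v)"
  unfolding pg_line_def indep_def span2_def by simp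

lemma pg_point_alt: "pg_point P \<longleftrightarrow> (\<exists>v. v \<noteq> 0 \<and> P = ray v)"
  unfolding pg_point_def ray_def by simp

lemma card_span2:
  fixes u v :: "'a::{finite,field} ^ 3"
  assumes "indep u v"
  shows "card (span2 u v) = CARD('a) * CARD('a)"
proof -
  have "span2 u v = (\<lambda>(a,b). a *s u + b *s v) ` UNIV" unfolding span2_def by auto
  moreover have "inj (\<lambda>(a::'a,b::'a). a *s u + b *s v)"
  proof (rule injI, clarsimp)
    fix a b a' b' :: 'a
    assume "a *s u + b *s v = a' *s u + b' *s v"
    then have "(a - a') *s u + (b - b') *s v = 0"
      by (simp add: vector_sub_rdistrib algebra_simps)
    then show "a = a' \<and> b = b'" using assms unfolding indep_def by force
  qed
  ultimately have "card (span2 u v) = card ((UNIV:: 'a set) \<times> (UNIV :: 'a set))"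
    by (simp add: card_image)
  then show ?thesis by (simp add: card_cartesian_product)
qed


lemma line_closed:
  assumes "pg_line L" "x \<in> L" "y \<in> L"
  shows "a *s x + b *s y \<in> L"
proof -
  obtain u v where L: "L = span2 u v" using assms(1) pg_line_alt by blast
  obtain a1 b1 where x: "x = a1 *s u + b1 *s v" using assms(2) L unfolding span2_def by blast
  obtain a2 b2 where y: "y = a2 *s u + b2 *s v" using assms(3) L unfolding span2_def by blast
  have "a *s x + b *s y = (a*a1 + b*a2) *s u + (a*b1+b*b2) *s v"
    unfolding x y by (simp add: vec_eq_iff algebra_simps)
  then show ?thesis unfolding L span2_def by blast
qed

lemma line_zero: "pg_line L \<Longrightarrow> 0 \<in> L"
proof -
  assume "pg_line L"
  then obtain u v where L: "L = span2 u v" using pg_line_alt by blast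
  have "(0::'a^3) = 0 *s u + 0 *s v" by simp
  then show ?thesis unfolding L span2_def by blast
qed

lemma line_smult: "pg_line L \<Longrightarrow> x \<in> L \<Longrightarrow> c *s x \<in> L"
  using line_closed[of L x x c 0] by simp

lemma line_diff: "pg_line L \<Longrightarrow> x \<in> L \<Longrightarrow> y \<in> L \<Longrightarrow> x - y \<in> L"
  using line_closed[of L x y 1 "-1"] by (simp add: vector_smult_lneg)

lemma card_line:
  fixes L :: "('a::{finite,field} ^ 3) set"
  shows "pg_line L \<Longrightarrow> card L = CARD('a) * CARD('a)"
  unfolding pg_line_alt using card_span2 by blast

lemma span2_sub: "pg_line L \<Longrightarrow> u \<in> L \<Longrightarrow> v \<in> L \<Longrightarrow> span2 u v \<subseteq> L"
  unfolding span2_def using line_closed by blast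

lemma line_eq:
  fixes L :: "('a::{finite,field} ^ 3) set"
  assumes "pg_line L" "indep u v" "u \<in> L" "v \<in> L"
  shows "L = span2 u v"
proof -
  have "span2 u v \<subseteq> L" using span2_sub assms by blast
  moreover have "card (span2 u v) = card L" using card_span2[OF assms(2)] card_line[OF assms(1)] by simp
  ultimately show ?thesis using card_subset_eq[of L "span2 u v"] by simp
qed

lemma ray_sub: "pg_line L \<Longrightarrow> v \<in> L \<Longrightarrow> ray v \<subseteq> L"
  unfolding ray_def using line_smult by blast

lemma in_ray: "v \<in> ray v" unfolding ray_def by (metis rangeI vector_smult_lid)
lemma zero_ray: "0 \<in> ray v" unfolding ray_def by (metis rangeI vector_smult_lzero)

lemma card_ray:
  fixes v :: "'a::{finite,field} ^ 3"
  assumes "v \<noteq> 0" shows "card (ray v) = CARD('a)"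
proof -
  have "inj (\<lambda>c::'a. c *s v)" using assms by (auto intro: injI)
  then show ?thesis unfolding ray_def by (simp add: card_image)
qed

lemma ray_same:
  fixes v x :: "'a::field ^ 3"
  assumes "x \<in> ray v" "x \<noteq> 0" shows "ray x = ray v"
proof -
  obtain c where x: "x = c *s v" using assms(1) unfolding ray_def by blast
  have c: "c \<noteq> 0" using x assms(2) by auto
  show ?thesis
  proof
    show "ray x \<subseteq> ray v" unfolding ray_def x by (auto simp: vector_smult_assoc)
    show "ray v \<subseteq> ray x" unfolding ray_def x
    proof
      fix y assume "y \<in> range (\<lambda>d. d *s v)"
      then obtain d where "y = d *s v" by blast
      then have "y = (d / c) *s (c *s v)" using c by (simp add: vector_smult_assoc)
      then show "y \<in> range (\<lambda>d. d *s (c *s v))" by blast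
    qed
  qed
qed

lemma ray_indep:
  fixes v w :: "'a::field ^ 3"
  assumes "v \<noteq> 0" "w \<noteq> 0" "ray v \<noteq> ray w"
  shows "indep v w"
  unfolding indep_def
proof (intro allI impI)
  fix a b assume h: "a *s v + b *s w = 0"
  show "a = 0 \<and> b = 0"
  proof (rule ccontr)
    assume "\<not> (a = 0 \<and> b = 0)"
    moreover have "a = 0 \<Longrightarrow> b = 0" using h assms by simp
    moreover have "b = 0 \<Longrightarrow> a = 0" using h assms by simp
    ultimately have a: "a \<noteq> 0" and b: "b \<noteq> 0" by auto
    have "b *s w = - (a *s v)" using h by (simp add: eq_neg_iff_add_eq_0 add.commute)
    then have "w = (- a / b) *s v" using b
      by (metis (no_types, lifting) divide_inverse_commute nonzero_eq_divide_eq vector_mul_lcancel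
          vector_smult_assoc vector_smult_lneg mult.commute)
    then have "w \<in> ray v" unfolding ray_def by blast
    then have "ray w = ray v" using ray_same assms by blast
    then show False using assms by simp
  qed
qed



lemma point_ray: "pg_point P \<Longrightarrow> \<exists>v. v \<noteq> 0 \<and> P = ray v" using pg_point_alt by blast

lemma card_ge_2: "CARD('a::{finite,field}) \<ge> 2"
proof -
  have "card {0::'a, 1} = 2" by simp
  moreover have "card {0::'a, 1} \<le> CARD('a)" by (rule card_mono) auto
  ultimately show ?thesis by simp
qed

lemma count_points:
  fixes S :: "('a::{finite,field} ^ 3) set"
  assumes "0 \<in> S" "\<And>x c. x \<in> S \<Longrightarrow> c *s x \<in> S"
  shows "card {P. pg_point P \<and> P \<subseteq> S} * (CARD('a) - 1) = card S - 1"
proof -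
  let ?A = "{P. pg_point P \<and> P \<subseteq> S}"
  have "(\<Sum>P\<in>?A. card {x\<in>S-{0}. x \<in> P}) = card (S - {0})"
  proof (rule unique_count)
    fix x assume x: "x \<in> S - {0}"
    have x0: "x \<noteq> 0" and xS: "x \<in> S" using x by auto
    have p: "pg_point (ray x)" unfolding pg_point_alt using x0 by blast
    have "ray x \<subseteq> S" unfolding ray_def using assms(2)[OF xS] by blast
    then have r: "ray x \<in> ?A" using p by simp
    show "\<exists>!P. P \<in> ?A \<and> x \<in> P"
    proof (rule ex1I[of _ "ray x"])
      show "ray x \<in> ?A \<and> x \<in> ray x" using r in_ray by blast
      fix P assume "P \<in> ?A \<and> x \<in> P"
      then obtain v where "v \<noteq> 0" "P = ray v" "x \<in> P" using pg_point_alt by blast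
      then show "P = ray x" using ray_same[of x v] x0 by simp
    qed
  qed (rule finite, rule finite)
  moreover have "card {x\<in>S-{0}. x \<in> P} = CARD('a) - 1" if "P \<in> ?A" for P
  proof -
    have "pg_point P" using that by simp
    then obtain v where v: "v \<noteq> 0" "P = ray v" using point_ray by blast
    have "{x\<in>S-{0}. x \<in> P} = P - {0}" using that by blast
    moreover have "card (P - {0}) = card P - 1" using v(2) zero_ray[of v] by (simp add: card_Diff_singleton)
    ultimately show ?thesis using card_ray[OF v(1)] v(2) by simp
  qed
  ultimately have "(\<Sum>P\<in>?A. CARD('a) - 1) = card (S - {0})"
    by (metis (no_types, lifting) sum.cong)
  moreover have "card (S - {0}) = card S - 1" using assms(1) by (simp add: card_Diff_singleton)
  ultimately show ?thesis by (simp add: mult.commute)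
qed

lemma cube_fact: "(q::nat) \<ge> 2 \<Longrightarrow> q^3 - 1 = (q^2+q+1) * (q - 1)"
proof -
  assume "q \<ge> 2"
  then obtain p where "q = p + 2" by (metis add.commute le_Suc_ex)
  then show ?thesis by (simp add: algebra_simps power3_eq_cube power2_eq_square)
qed

lemma sq_fact: "(q::nat) \<ge> 2 \<Longrightarrow> q*q - 1 = (q+1) * (q - 1)"
proof -
  assume "q \<ge> 2"
  then obtain p where "q = p + 2" by (metis add.commute le_Suc_ex)
  then show ?thesis by (simp add: algebra_simps)
qed

lemma num_points:
  shows "card {P::('a::{finite,field}^3) set. pg_point P} = CARD('a)^2 + CARD('a) + 1"
proof -
  have "card {P::('a^3) set. pg_point P \<and> P \<subseteq> UNIV} * (CARD('a) - 1) = CARD('a)^3 - 1"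
    using count_points[of "UNIV :: ('a^3) set"] by simp
  then have "card {P::('a^3) set. pg_point P} * (CARD('a) - 1) = (CARD('a)^2 + CARD('a) + 1) * (CARD('a) - 1)"
    using cube_fact[OF card_ge_2] by simp
  moreover have "CARD('a) - 1 \<noteq> 0" using card_ge_2[where 'a='a] by linarith
  ultimately show ?thesis using mult_right_cancel by blast
qed

lemma num_points_line:
  fixes L :: "('a::{finite,field} ^ 3) set"
  assumes "pg_line L"
  shows "card (points_on L) = CARD('a) + 1"
proof -
  have "card (points_on L) * (CARD('a) - 1) = CARD('a) * CARD('a) - 1"
    using count_points[of L] line_zero[OF assms] line_smult[OF assms] card_line[OF assms]
    unfolding points_on_def by simp
  then have "card (points_on L) * (CARD('a) - 1) = (CARD('a) + 1) * (CARD('a) - 1)"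
    using sq_fact[OF card_ge_2] by simp
  moreover have "CARD('a) - 1 \<noteq> 0" using card_ge_2[where 'a='a] by linarith
  ultimately show ?thesis using mult_right_cancel by blast
qed


lemma join_unique:
  fixes P Q :: "('a::{finite,field} ^ 3) set"
  assumes "pg_point P" "pg_point Q" "P \<noteq> Q"
  shows "\<exists>!L. pg_line L \<and> P \<subseteq> L \<and> Q \<subseteq> L"
proof -
  obtain u where u: "u \<noteq> 0" "P = ray u" using point_ray[OF assms(1)] by blast
  obtain v where v: "v \<noteq> 0" "Q = ray v" using point_ray[OF assms(2)] by blast
  have i: "indep u v" using ray_indep u v assms(3) by blast
  have l: "pg_line (span2 u v)" unfolding pg_line_alt using i by blast
  have "u = 1 *s u + 0 *s v" by simp
  then have "u \<in> span2 u v" unfolding span2_def by blast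
  have "v = 0 *s u + 1 *s v" by simp
  then have "v \<in> span2 u v" unfolding span2_def by blast
  show ?thesis
  proof (rule ex1I[of _ "span2 u v"])
    show "pg_line (span2 u v) \<and> P \<subseteq> span2 u v \<and> Q \<subseteq> span2 u v"
      using l ray_sub \<open>u \<in> span2 u v\<close> \<open>v \<in> span2 u v\<close> u v by blast
    fix L assume "pg_line L \<and> P \<subseteq> L \<and> Q \<subseteq> L"
    then have "pg_line L" "u \<in> L" "v \<in> L" using in_ray u v by blast+
    then show "L = span2 u v" using line_eq i by blast
  qed
qed

lemma meet_exists:
  fixes L1 L2 :: "('a::{finite,field} ^ 3) set"
  assumes "pg_line L1" "pg_line L2"
  shows "\<exists>w. w \<noteq> 0 \<and> w \<in> L1 \<and> w \<in> L2"
proof (rule ccontr)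
  assume "\<not> ?thesis"
  then have h: "\<And>w. w \<in> L1 \<Longrightarrow> w \<in> L2 \<Longrightarrow> w = 0" by blast
  have "inj_on (\<lambda>(x,y). x + y) (L1 \<times> L2)"
  proof (rule inj_onI, clarsimp)
    fix x y x' y' assume xs: "x \<in> L1" "y \<in> L2" "x' \<in> L1" "y' \<in> L2" "x + y = x' + y'"
    have "x - x' \<in> L1" using line_diff assms(1) xs by blast
    moreover have "x - x' = y' - y" using xs(5) by (simp add: algebra_simps)
    moreover have "y' - y \<in> L2" using line_diff assms(2) xs by blast
    ultimately have "x - x' = 0" using h by metis
    then show "x = x' \<and> y = y'" using xs(5) by simp
  qed
  then have "card (L1 \<times> L2) \<le> card (UNIV :: ('a^3) set)"
    by (rule card_inj_on_le) auto
  moreover have "card (L1 \<times> L2) = CARD('a) * CARD('a) * (CARD('a) * CARD('a))"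
    by (simp only: card_cartesian_product card_line[OF assms(1)] card_line[OF assms(2)])
  moreover have "card (UNIV :: ('a^3) set) = CARD('a) ^ 3" by simp
  moreover have "CARD('a) ^ 3 < CARD('a) * CARD('a) * (CARD('a) * CARD('a))"
  proof -
    define q where "q = CARD('a)"
    have q: "q \<ge> 2" unfolding q_def by (rule card_ge_2)
    have "q ^ 3 * 2 \<le> q ^ 3 * q" using q by (rule mult_left_mono) simp
    moreover have "q ^ 3 > 0" using q by simp
    moreover have "q * q * (q * q) = q ^ 3 * q" by (simp add: power3_eq_cube)
    ultimately show ?thesis unfolding q_def[symmetric] by linarith
  qed
  ultimately show False by linarith
qed

lemma meet_unique:
  fixes L1 L2 :: "('a::{finite,field} ^ 3) set"
  assumes "pg_line L1" "pg_line L2" "L1 \<noteq> L2"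
  shows "\<exists>!P. pg_point P \<and> P \<subseteq> L1 \<and> P \<subseteq> L2"
proof -
  obtain w where w: "w \<noteq> 0" "w \<in> L1" "w \<in> L2" using meet_exists assms by blast
  show ?thesis
  proof (rule ex1I[of _ "ray w"])
    have pw: "pg_point (ray w)" unfolding pg_point_alt using w(1) by blast
    have s1: "ray w \<subseteq> L1" using ray_sub[OF assms(1) w(2)] .
    have s2: "ray w \<subseteq> L2" using ray_sub[OF assms(2) w(3)] .
    show "pg_point (ray w) \<and> ray w \<subseteq> L1 \<and> ray w \<subseteq> L2" using pw s1 s2 by simp
    fix P assume P: "pg_point P \<and> P \<subseteq> L1 \<and> P \<subseteq> L2"
    show "P = ray w"
    proof (rule ccontr)
      assume "P \<noteq> ray w"
      then have u: "\<exists>!L. pg_line L \<and> P \<subseteq> L \<and> ray w \<subseteq> L"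
        using join_unique[of P "ray w"] P pw by simp
      have "pg_line L1 \<and> P \<subseteq> L1 \<and> ray w \<subseteq> L1" using assms(1) P s1 by simp
      moreover have "pg_line L2 \<and> P \<subseteq> L2 \<and> ray w \<subseteq> L2" using assms(2) P s2 by simp
      ultimately have "L1 = L2" using u by blast
      then show False using assms(3) by simp
    qed
  qed
qed

lemma points_on_iff: "Q \<in> points_on L \<longleftrightarrow> pg_point Q \<and> Q \<subseteq> L"
  unfolding points_on_def by simp

lemma sum_through:
  fixes P :: "('a::{finite,field} ^ 3) set"
  assumes "pg_point P" "\<forall>Q\<in>X. pg_point Q"
  shows "(\<Sum>L\<in>{L. pg_line L \<and> P \<subseteq> L}. card (points_on L \<inter> X - {P})) = card (X - {P})"
proof -
  have "(\<Sum>L\<in>{L. pg_line L \<and> P \<subseteq> L}. card {Q\<in>X - {P}. Q \<subseteq> L}) = card (X - {P})"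
  proof (rule unique_count)
    fix Q assume Q: "Q \<in> X - {P}"
    then have "pg_point Q" "Q \<noteq> P" using assms by auto
    then have "\<exists>!L. pg_line L \<and> P \<subseteq> L \<and> Q \<subseteq> L" using join_unique assms(1) by metis
    then show "\<exists>!L. L \<in> {L. pg_line L \<and> P \<subseteq> L} \<and> Q \<subseteq> L" by simp
  qed (rule finite, rule finite)
  moreover have "{Q\<in>X - {P}. Q \<subseteq> L} = points_on L \<inter> X - {P}" for L
    using assms(2) unfolding points_on_def by blast
  ultimately show ?thesis by simp
qed

lemma num_lines_through:
  fixes P :: "('a::{finite,field} ^ 3) set"
  assumes "pg_point P"
  shows "card {L. pg_line L \<and> P \<subseteq> L} = CARD('a) + 1"
proof -
  let ?X = "{Q::('a^3) set. pg_point Q}"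
  have s: "(\<Sum>L\<in>{L. pg_line L \<and> P \<subseteq> L}. card (points_on L \<inter> ?X - {P})) = card (?X - {P})"
    by (rule sum_through[OF assms]) simp
  have "card (points_on L \<inter> ?X - {P}) = CARD('a)" if "L \<in> {L. pg_line L \<and> P \<subseteq> L}" for L
  proof -
    have "points_on L \<inter> ?X = points_on L" unfolding points_on_def by blast
    moreover have "P \<in> points_on L" using that assms unfolding points_on_def by simp
    ultimately show ?thesis using num_points_line[of L] that by (simp add: card_Diff_singleton)
  qed
  then have "(\<Sum>L\<in>{L. pg_line L \<and> P \<subseteq> L}. card (points_on L \<inter> ?X - {P})) = card {L. pg_line L \<and> P \<subseteq> L} * CARD('a)"
    by simp
  moreover have "card (?X - {P}) = (CARD('a) + 1) * CARD('a)"
    using num_points[where 'a='a] assms by (simp add: card_Diff_singleton power2_eq_square algebra_simps)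
  ultimately have "card {L. pg_line L \<and> P \<subseteq> L} * CARD('a) = (CARD('a) + 1) * CARD('a)" using s by simp
  moreover have "CARD('a) \<noteq> 0" by simp
  ultimately show ?thesis using mult_right_cancel by blast
qed


lemma arith_y:
  fixes q x y n :: int
  assumes "q \<ge> 7" "n = q - 3" "n*x + (n+1)*y = q*n" "x \<ge> 0" "y \<ge> 1"
  shows "y = n"
proof -
  define j where "j = q - x - y"
  have yj: "y = n * j" using assms(3) unfolding j_def by (simp add: algebra_simps)
  have n: "n \<ge> 4" using assms by simp
  have j1: "j \<ge> 1"
  proof (rule ccontr)
    assume "\<not> j \<ge> 1"
    then have "j \<le> 0" by simp
    then have "n * j \<le> 0" using n by (simp add: mult_nonneg_nonpos)
    then show False using yj assms(5) by simp
  qed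
  have j2: "j \<le> 1"
  proof (rule ccontr)
    assume "\<not> j \<le> 1"
    then have "j \<ge> 2" by simp
    then have h2: "x + y \<le> q - 2" unfolding j_def by simp
    have "n * j \<ge> n * 2" using n \<open>j \<ge> 2\<close> by (intro mult_left_mono) simp_all
    then show False using yj assms h2 by linarith
  qed
  show ?thesis using yj j1 j2 by simp
qed

lemma arith_a:
  fixes q a :: nat
  assumes "q \<ge> 7" "(q+1)*(q-3-1) + a = q*(q-3) - 1"
  shows "a = 3"
proof -
  obtain r where "q = r + 7" using assms(1) by (metis add.commute le_Suc_ex)
  then show ?thesis using assms(2) by (simp add: algebra_simps)
qed

lemma arith_final:
  fixes q t :: nat
  assumes "q \<ge> 7" "t - 1 = 2*(q-2) + (q+1-(q-2))*(q-3-1)" "3*(q*(q-3)) = t*(q-2)"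
  shows False
proof -
  obtain r where r: "q = r + 7" using assms(1) by (metis add.commute le_Suc_ex)
  have "q+1-(q-2) = 3" using assms(1) by simp
  then have "t = 5*r + 20" using assms(2) r by simp
  then show False using assms(3) r by (simp add: algebra_simps)
qed


theorem mainTheorem16:
  fixes K :: "('a::{finite,field} ^ 3) set set"
  assumes "CARD('a) \<ge> 7"
    and "\<forall>P\<in>K. pg_point P"
    and "card K = CARD('a) * (CARD('a) - 3)"
  shows "\<exists>L. pg_line L \<and>
           card (points_on L \<inter> K) \<notin> {0, CARD('a) - 3, CARD('a) - 2}"
proof (rule ccontr)
  assume "\<not> ?thesis"
  then have H: "\<And>L. pg_line L \<Longrightarrow> card (points_on L \<inter> K) \<in> {0, CARD('a) - 3, CARD('a) - 2}"
    by blast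
  define q where "q = CARD('a)"
  define n where "n = q - 3"
  define m where "m = q - 2"
  define c where "c L = card (points_on L \<inter> K)" for L
  define lt where "lt P = {L. pg_line L \<and> P \<subseteq> L}" for P :: "('a^3) set"
  define Ms where "Ms = {L. pg_line L \<and> c L = m}"
  have q7: "q \<ge> 7" using assms(1) q_def by simp
  have Hc: "\<And>L. pg_line L \<Longrightarrow> c L = 0 \<or> c L = n \<or> c L = m"
    using H unfolding c_def n_def m_def q_def by auto
  have nm: "n \<noteq> m" "n > 0" "m = n + 1" using q7 unfolding n_def m_def by auto
  have cardK: "card K = q * n" using assms(3) q_def n_def by simp
  have Kpts: "\<forall>Q\<in>K. pg_point Q" using assms(2) .
  have ltc: "card (lt P) = q + 1" if "pg_point P" for P
    using num_lines_through[OF that] unfolding lt_def q_def .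
  have a3: "card {L\<in>lt P. c L = m} = 3" if PK: "P \<in> K" for P
  proof -
    have Pp: "pg_point P" using Kpts PK by blast
    have s: "(\<Sum>L\<in>lt P. card (points_on L \<inter> K - {P})) = card (K - {P})"
      using sum_through[OF Pp Kpts] unfolding lt_def .
    have "card (points_on L \<inter> K - {P}) = (n - 1) + (if c L = m then 1 else 0)" if L: "L \<in> lt P" for L
    proof -
      have pl: "pg_line L" "P \<subseteq> L" using L unfolding lt_def by auto
      have "P \<in> points_on L \<inter> K" using pl Pp PK unfolding points_on_def by simp
      then have e: "card (points_on L \<inter> K - {P}) = c L - 1" unfolding c_def
        by (simp add: card_Diff_singleton)
      have "c L \<noteq> 0" using \<open>P \<in> points_on L \<inter> K\<close> unfolding c_def by (metis card_0_eq empty_iff finite)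
      then have "c L = n \<or> c L = m" using Hc[OF pl(1)] by simp
      then show ?thesis using e nm by auto
    qed
    then have "(\<Sum>L\<in>lt P. card (points_on L \<inter> K - {P})) = (\<Sum>L\<in>lt P. (n - 1) + (if c L = m then 1 else 0))"
      by (rule sum.cong[OF refl])
    also have "\<dots> = card (lt P) * (n - 1) + card {L\<in>lt P. c L = m}"
      by (simp add: sum.distrib card_ind[symmetric])
    finally have "(q+1)*(q-3-1) + card {L\<in>lt P. c L = m} = q*(q-3) - 1"
      using s ltc[OF Pp] cardK PK n_def by (simp add: card_Diff_singleton)
    then show ?thesis using arith_a q7 by blast
  qed
  have "(\<Sum>P\<in>K. card {L\<in>Ms. P \<subseteq> L}) = (\<Sum>L\<in>Ms. card {P\<in>K. P \<subseteq> L})"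
    by (rule swap_count) (rule finite, rule finite)
  moreover have "card {L\<in>Ms. P \<subseteq> L} = 3" if "P \<in> K" for P
  proof -
    have "{L\<in>Ms. P \<subseteq> L} = {L\<in>lt P. c L = m}" unfolding Ms_def lt_def by auto
    then show ?thesis using a3[OF that] by simp
  qed
  moreover have "card {P\<in>K. P \<subseteq> L} = m" if "L \<in> Ms" for L
  proof -
    have "{P\<in>K. P \<subseteq> L} = points_on L \<inter> K" using Kpts unfolding points_on_def by auto
    then show ?thesis using that unfolding Ms_def c_def by simp
  qed
  ultimately have tm: "3 * (q * n) = card Ms * m" using cardK by simp
  have "card K > 0" using cardK q7 n_def by simp
  then obtain P0 where P0: "P0 \<in> K" by (metis card_gt_0_iff ex_in_conv)
  then have "card {L\<in>lt P0. c L = m} \<noteq> 0" using a3 by simp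
  then have "{L\<in>lt P0. c L = m} \<noteq> {}" by (intro notI) simp
  then obtain M where M: "M \<in> lt P0" "c M = m" by blast
  have Mline: "pg_line M" and MMs: "M \<in> Ms" using M unfolding lt_def Ms_def by auto
  have yQ: "card {L\<in>Ms. Q \<subseteq> L} = (if Q \<in> K then 3 else n)" if Q: "Q \<in> points_on M" for Q
  proof (cases "Q \<in> K")
    case True
    have "{L\<in>Ms. Q \<subseteq> L} = {L\<in>lt Q. c L = m}" unfolding Ms_def lt_def by auto
    then show ?thesis using a3[OF True] True by simp
  next
    case False
    have Qp: "pg_point Q" using Q unfolding points_on_def by simp
    have s: "(\<Sum>L\<in>lt Q. card (points_on L \<inter> K - {Q})) = card (K - {Q})"
      using sum_through[OF Qp Kpts] unfolding lt_def .
    have "card (points_on L \<inter> K - {Q}) = (if c L = n then n else 0) + (if c L = m then m else 0)"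
      if L: "L \<in> lt Q" for L
    proof -
      have "points_on L \<inter> K - {Q} = points_on L \<inter> K" using False by blast
      moreover have "c L = 0 \<or> c L = n \<or> c L = m" using Hc L unfolding lt_def by simp
      ultimately show ?thesis unfolding c_def using nm by auto
    qed
    then have "(\<Sum>L\<in>lt Q. card (points_on L \<inter> K - {Q})) =
        (\<Sum>L\<in>lt Q. (if c L = n then n else 0) + (if c L = m then m else 0))"
      by (rule sum.cong[OF refl])
    also have "\<dots> = n * card {L\<in>lt Q. c L = n} + m * card {L\<in>lt Q. c L = m}"
      by (simp add: sum.distrib sum.If_cases Int_def conj_commute)
    finally have e: "n * card {L\<in>lt Q. c L = n} + (n+1) * card {L\<in>lt Q. c L = m} = q * n"
      using s False cardK nm by simp
    have "M \<in> {L\<in>lt Q. c L = m}" using Q M Mline unfolding lt_def points_on_def by simp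
    then have "{L\<in>lt Q. c L = m} \<noteq> {}" by blast
    then have y1: "card {L\<in>lt Q. c L = m} \<ge> 1"
      by (simp add: Suc_le_eq card_gt_0_iff)
    have "int (card {L\<in>lt Q. c L = m}) = int n"
    proof (rule arith_y[where q="int q" and x="int (card {L\<in>lt Q. c L = n})"])
      show "int q \<ge> 7" using q7 by simp
      show "int n = int q - 3" using q7 n_def by simp
      show "int n * int (card {L\<in>lt Q. c L = n}) + (int n + 1) * int (card {L\<in>lt Q. c L = m}) = int q * int n"
        using arg_cong[OF e, of int] by (simp add: algebra_simps)
      show "int (card {L\<in>lt Q. c L = n}) \<ge> 0" by simp
      show "int (card {L\<in>lt Q. c L = m}) \<ge> 1" using y1 by simp
    qed
    moreover have "{L\<in>Ms. Q \<subseteq> L} = {L\<in>lt Q. c L = m}" unfolding Ms_def lt_def by auto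
    ultimately show ?thesis using False by simp
  qed
  have "(\<Sum>Q\<in>points_on M. card {L\<in>Ms - {M}. Q \<subseteq> L}) = card (Ms - {M})"
  proof (rule unique_count)
    fix L assume L: "L \<in> Ms - {M}"
    then have "pg_line L" "L \<noteq> M" unfolding Ms_def by auto
    then have "\<exists>!P. pg_point P \<and> P \<subseteq> M \<and> P \<subseteq> L" using meet_unique Mline by metis
    then show "\<exists>!Q. Q \<in> points_on M \<and> Q \<subseteq> L" unfolding points_on_def by simp
  qed (rule finite, rule finite)
  moreover have "card {L\<in>Ms - {M}. Q \<subseteq> L} = (if Q \<in> K then 2 else n - 1)" if Q: "Q \<in> points_on M" for Q
  proof -
    have "{L\<in>Ms - {M}. Q \<subseteq> L} = {L\<in>Ms. Q \<subseteq> L} - {M}" by auto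
    moreover have "M \<in> {L\<in>Ms. Q \<subseteq> L}" using MMs Q unfolding points_on_def by simp
    ultimately show ?thesis using yQ[OF Q] by (simp add: card_Diff_singleton)
  qed
  moreover note cnt = calculation
  have "(\<Sum>Q\<in>points_on M. if Q \<in> K then 2 else n - 1) = (\<Sum>Q\<in>points_on M. card {L\<in>Ms - {M}. Q \<subseteq> L})"
    by (rule sum.cong[OF refl], rule sym, erule cnt(2))
  then have "(\<Sum>Q\<in>points_on M. if Q \<in> K then 2 else n - 1) = card (Ms - {M})"
    using cnt(1) by simp
  moreover have "(\<Sum>Q\<in>points_on M. if Q \<in> K then 2 else n - 1) =
      2 * card (points_on M \<inter> K) + (n - 1) * card (points_on M - K)"
    by (simp add: sum.If_cases Int_def Diff_eq)
  moreover have "card (points_on M \<inter> K) = m" using M unfolding c_def by simp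
  moreover have "card (points_on M - K) = (q + 1) - m"
    using num_points_line[OF Mline] \<open>card (points_on M \<inter> K) = m\<close> unfolding q_def
    by (simp add: card_Diff_subset_Int)
  moreover have "card (Ms - {M}) = card Ms - 1" using MMs by (simp add: card_Diff_singleton)
  ultimately have "card Ms - 1 = 2 * (q - 2) + (q + 1 - (q - 2)) * (q - 3 - 1)"
    unfolding m_def n_def by (simp add: ac_simps)
  then show False using arith_final[OF q7] tm unfolding n_def m_def by blast
qed

end
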